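(* Let $m\ge2$, let $C=\mathrm{diag}(c_1,\dots,c_m)$ be a real diagonal matrix, and let $L(\rho)=-2\,\mathrm{tr}(C\rho)$ on $\dot P_m$, whose gradient system with respect to the quantum SLD Fisher metric is $\frac{d\rho}{dt}=(\rho C+C\rho)-2\,\mathrm{tr}(\rho C)\rho$. Let $\Lambda(w)=-\frac12w^TCw$ on $\mathcal S_m$, with gradient $\mathrm{grad}\,\Lambda(w)=-Cw+(w^TCw)w$ (so that $\frac{dw}{dt}=-\mathrm{grad}\,\Lambda(w)=Cw-(w^TCw)w$ is the averaged learning equation of Hebb type), and let $\mu_\ast\mathrm{grad}\,\Lambda$ be the vector field on $\mathcal D_m$ defined by $\mu_\ast\mathrm{grad}\,\Lambda(\mu(w))=\mu_{\ast,w}(\mathrm{grad}\,\Lambda(w))$ for $w\in\mathcal S_m$. Then for every $\Theta\in\mathcal D_m$, $$\mathrm{grad}\,L(\Theta)=\mu_\ast\mathrm{grad}\,\Lambda(\Theta).$$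
   Context: $\mathcal S_m=\{w\in\mathbf R^m:\|w\|=1,\ w_k\ne0\ \forall k\}$ with $T_w\mathcal S_m=\{u:w^Tu=0\}$ and metric $u^Tu'$; $\mathcal D_m=\{\mathrm{diag}(\theta_1,\dots,\theta_m):\sum\theta_k=1,\theta_k>0\}\subset\dot P_m$; $\mu:\mathcal S_m\to\mathcal D_m$, $\mu(w)=\mathrm{diag}(w_1^2,\dots,w_m^2)$, with differential $\mu_{\ast,w}(u)=2\,\mathrm{diag}(w_1u_1,\dots,w_mu_m)$. (The vector field $\mu_\ast\mathrm{grad}\,\Lambda$ is well defined since $\mu(w)=\mu(w')$ iff $w'$ is obtained from $w$ by coordinate sign changes, under which $\mathrm{grad}\,\Lambda$ is equivariant.) $\dot P_m$ is the set of $m\times m$ complex Hermitian positive definite trace-one matrices, $T_\rho\dot P_m$ the Hermitian traceless matrices. The SLD $\mathcal L_\rho(\Xi)$ is the Hermitian solution of $\frac12(\rho\mathcal L_\rho(\Xi)+\mathcal L_\rho(\Xi)\rho)=\Xi$; the quantum SLD Fisher metric is $\langle\Xi,\Xi'\rangle_\rho=\frac12\mathrm{tr}[\rho(\mathcal L_\rho(\Xi)\mathcal L_\rho(\Xi')+\mathcal L_\rho(\Xi')\mathcal L_\rho(\Xi))]$. The gradient $\mathrm{grad}\,L(\rho)\in T_\rho\dot P_m$ is defined by $\langle\mathrm{grad}\,L(\rho),\Xi\rangle_\rho=\frac{d}{d\tau}\big|_{\tau=0}L(r(\tau))$ for every smooth curve $r$ in $\dot P_m$ with $r(0)=\rho$,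 $r'(0)=\Xi$. *)

theory Defs
  imports "HOL-Analysis.Analysis"
begin

text \<open>Complex m x m matrices are modelled as complex^'n^'n with a finite index type 'n
  (m = CARD('n)); real vectors in R^m as real^'n.\<close>

definition mtr :: "complex^'n^'n \<Rightarrow> complex" where
  "mtr A = (\<Sum>i\<in>UNIV. A$i$i)"

definition ctrans :: "complex^'n^'n \<Rightarrow> complex^'n^'n" where
  "ctrans A = (\<chi> i j. cnj (A$j$i))"

definition hermitian :: "complex^'n^'n \<Rightarrow> bool" where
  "hermitian A \<longleftrightarrow> ctrans A = A"

definition pos_def :: "complex^'n^'n \<Rightarrow> bool" where
  "pos_def A \<longleftrightarrow> hermitian A \<and>
     (\<forall>x::complex^'n. x \<noteq> 0 \<longrightarrow> Re (\<Sum>i\<in>UNIV. cnj (x$i) * (A *v x)$i) > 0)"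

definition Pdot :: "(complex^'n^'n) set" where
  "Pdot = {\<rho>. pos_def \<rho> \<and> mtr \<rho> = 1}"

definition tangent :: "(complex^'n^'n) set" where
  "tangent = {X. hermitian X \<and> mtr X = 0}"

definition SLD :: "complex^'n^'n \<Rightarrow> complex^'n^'n \<Rightarrow> complex^'n^'n" where
  "SLD \<rho> \<Xi> = (THE X. hermitian X \<and> (1/2) *\<^sub>R (\<rho> ** X + X ** \<rho>) = \<Xi>)"

definition qfisher :: "complex^'n^'n \<Rightarrow> complex^'n^'n \<Rightarrow> complex^'n^'n \<Rightarrow> real" where
  "qfisher \<rho> \<Xi> \<Xi>' = Re ((1/2) * mtr (\<rho> ** (SLD \<rho> \<Xi> ** SLD \<rho> \<Xi>' + SLD \<rho> \<Xi>' ** SLD \<rho> \<Xi>)))"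

definition smooth_on :: "real set \<Rightarrow> (real \<Rightarrow> 'a::real_normed_vector) \<Rightarrow> bool" where
  "smooth_on S r \<longleftrightarrow> (\<exists>D :: nat \<Rightarrow> real \<Rightarrow> 'a. (\<forall>t\<in>S. D 0 t = r t) \<and>
      (\<forall>k. \<forall>t\<in>S. (D k has_vector_derivative D (Suc k) t) (at t)))"

definition curve_through :: "(real \<Rightarrow> complex^'n^'n) \<Rightarrow> complex^'n^'n \<Rightarrow> complex^'n^'n \<Rightarrow> bool" where
  "curve_through r \<rho> \<Xi> \<longleftrightarrow> (\<exists>\<epsilon>>0. smooth_on {-\<epsilon><..<\<epsilon>} r \<and> (\<forall>\<tau>\<in>{-\<epsilon><..<\<epsilon>}. r \<tau> \<in> Pdot))
      \<and> r 0 = \<rho> \<and> (r has_vector_derivative \<Xi>) (at 0)"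

definition qgrad :: "(complex^'n^'n \<Rightarrow> real) \<Rightarrow> complex^'n^'n \<Rightarrow> complex^'n^'n" where
  "qgrad L \<rho> = (THE G. G \<in> tangent \<and>
     (\<forall>r \<Xi>. curve_through r \<rho> \<Xi> \<longrightarrow>
        ((\<lambda>\<tau>. L (r \<tau>)) has_real_derivative qfisher \<rho> G \<Xi>) (at 0)))"

definition cdiag :: "real^'n \<Rightarrow> complex^'n^'n" where
  "cdiag c = (\<chi> i j. if i = j then complex_of_real (c$i) else 0)"

definition Lcost :: "real^'n \<Rightarrow> complex^'n^'n \<Rightarrow> real" where
  "Lcost c \<rho> = -2 * Re (mtr (cdiag c ** \<rho>))"

definition Sm :: "(real^'n) set" where
  "Sm = {w. norm w = 1 \<and> (\<forall>k. w$k \<noteq> 0)}"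

definition Dm :: "(complex^'n^'n) set" where
  "Dm = {cdiag \<theta> | \<theta>. (\<forall>k. \<theta>$k > 0) \<and> (\<Sum>k\<in>UNIV. \<theta>$k) = 1}"

definition mu :: "real^'n \<Rightarrow> complex^'n^'n" where
  "mu w = cdiag (\<chi> k. (w$k)^2)"

definition mu_diff :: "real^'n \<Rightarrow> real^'n \<Rightarrow> complex^'n^'n" where
  "mu_diff w u = cdiag (\<chi> k. 2 * (w$k * u$k))"

definition gradLambda :: "real^'n \<Rightarrow> real^'n \<Rightarrow> real^'n" where
  "gradLambda c w = (let Cw = (\<chi> k. c$k * w$k) in - Cw + (w \<bullet> Cw) *\<^sub>R w)"

definition mu_push_gradLambda :: "real^'n \<Rightarrow> complex^'n^'n \<Rightarrow> complex^'n^'n" where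
  "mu_push_gradLambda c \<Theta> =
     (let w = (SOME w. w \<in> Sm \<and> mu w = \<Theta>) in mu_diff w (gradLambda c w))"

end

theory Submission
  imports Defs
begin

lemma cdiag_mult_left: "(cdiag t ** X) $ i $ j = complex_of_real (t$i) * X$i$j"
proof -
  have "(cdiag t ** X) $ i $ j = (\<Sum>k\<in>UNIV. (if i = k then complex_of_real (t$i) else 0) * X$k$j)"
    by (simp add: matrix_matrix_mult_def cdiag_def)
  also have "\<dots> = (\<Sum>k\<in>UNIV. (if i = k then complex_of_real (t$i) * X$k$j else 0))"
    by (rule sum.cong) auto
  also have "\<dots> = complex_of_real (t$i) * X$i$j" by simp
  finally show ?thesis .
qed

lemma cdiag_mult_right: "(X ** cdiag t) $ i $ j = X$i$j * complex_of_real (t$j)"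
  by (simp add: matrix_matrix_mult_def cdiag_def if_distrib cong: if_cong)

definition sldx :: "real^'n \<Rightarrow> complex^'n^'n \<Rightarrow> complex^'n^'n" where
  "sldx t A = (\<chi> i j. 2 * A$i$j / complex_of_real (t$i + t$j))"

lemma cdiag_sym_entry:
  "((1/2) *\<^sub>R (cdiag t ** X + X ** cdiag t)) $ i $ j = complex_of_real (t$i + t$j) * X$i$j / 2"
proof -
  have "((1/2) *\<^sub>R (cdiag t ** X + X ** cdiag t)) $ i $ j = (1/2) *\<^sub>R ((cdiag t ** X) $ i $ j + (X ** cdiag t) $ i $ j)"
    by simp
  also have "\<dots> = (1/2) *\<^sub>R (complex_of_real (t$i + t$j) * X$i$j)"
    unfolding cdiag_mult_left cdiag_mult_right by (simp add: algebra_simps)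
  also have "\<dots> = complex_of_real (t$i + t$j) * X$i$j / 2"
    by (simp add: scaleR_conv_of_real)
  finally show ?thesis .
qed

lemma SLD_explicit:
  assumes pos: "\<forall>k. t$k > 0" and h: "hermitian A"
  shows "SLD (cdiag t) A = sldx t A"
  unfolding SLD_def
proof (rule the_equality)
  have ne: "complex_of_real (t$i + t$j) \<noteq> 0" for i j
  proof -
    have "t$i + t$j > 0" using pos by (simp add: add_pos_pos)
    then show ?thesis by (simp only: of_real_eq_0_iff)
  qed
  have hA: "\<And>i j. cnj (A$j$i) = A$i$j" using h
    unfolding hermitian_def ctrans_def vec_eq_iff by simp
  show "hermitian (sldx t A) \<and> (1/2) *\<^sub>R (cdiag t ** sldx t A + sldx t A ** cdiag t) = A"
  proof
    show "hermitian (sldx t A)"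
      unfolding hermitian_def ctrans_def sldx_def vec_eq_iff
    proof (intro allI)
      fix i j
      show "(\<chi> i j. cnj ((\<chi> i j. 2 * A $ i $ j / complex_of_real (t $ i + t $ j)) $ j $ i)) $ i $ j =
        (\<chi> i j. 2 * A $ i $ j / complex_of_real (t $ i + t $ j)) $ i $ j"
        using hA[of i j] hA[of j i] by (simp add: add.commute)
    qed
    show "(1/2) *\<^sub>R (cdiag t ** sldx t A + sldx t A ** cdiag t) = A"
      unfolding vec_eq_iff cdiag_sym_entry
    proof (intro allI)
      fix i j
      show "complex_of_real (t$i + t$j) * sldx t A $ i $ j / 2 = A $ i $ j"
        unfolding sldx_def using ne[of i j] by simp
    qed
  qed
  fix X assume X: "hermitian X \<and> (1/2) *\<^sub>R (cdiag t ** X + X ** cdiag t) = A"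
  show "X = sldx t A"
    unfolding vec_eq_iff
  proof (intro allI)
    fix i j
    have "A$i$j = complex_of_real (t$i + t$j) * X$i$j / 2"
      using X cdiag_sym_entry[of t X i j] by simp
    then show "X$i$j = sldx t A $ i $ j" using ne[of i j] unfolding sldx_def
      by (simp add: field_simps)
  qed
qed
lemma mtr_cdiag: "mtr (cdiag t ** M) = (\<Sum>i\<in>UNIV. complex_of_real (t$i) * M$i$i)"
  by (simp add: mtr_def cdiag_mult_left)

lemma qfisher_explicit:
  assumes pos: "\<forall>k. t$k > 0" and hA: "hermitian A" and hB: "hermitian B"
  shows "qfisher (cdiag t) A B =
    Re (\<Sum>i\<in>UNIV. \<Sum>j\<in>UNIV. 2 * A$i$j * B$j$i / complex_of_real (t$i + t$j))"
proof -
  define Y where "Y = sldx t A"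
  define Z where "Z = sldx t B"
  have s1: "mtr (cdiag t ** (Y ** Z + Z ** Y)) =
     (\<Sum>i\<in>UNIV. \<Sum>k\<in>UNIV. complex_of_real (t$i) * (Y$i$k * Z$k$i))
     + (\<Sum>i\<in>UNIV. \<Sum>k\<in>UNIV. complex_of_real (t$i) * (Z$i$k * Y$k$i))"
  proof -
    have d: "\<And>i. (Y ** Z + Z ** Y)$i$i = (\<Sum>k\<in>UNIV. Y$i$k*Z$k$i) + (\<Sum>k\<in>UNIV. Z$i$k*Y$k$i)"
      by (simp add: matrix_matrix_mult_def)
    show ?thesis unfolding mtr_cdiag d distrib_left sum.distrib sum_distrib_left ..
  qed
  have s2: "(\<Sum>i\<in>UNIV. \<Sum>k\<in>UNIV. complex_of_real (t$i) * (Z$i$k * Y$k$i))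
      = (\<Sum>i\<in>UNIV. \<Sum>k\<in>UNIV. complex_of_real (t$k) * (Y$i$k * Z$k$i))"
    by (subst sum.swap) (intro sum.cong refl; metis mult.commute)
  have s3: "mtr (cdiag t ** (Y ** Z + Z ** Y)) =
     (\<Sum>i\<in>UNIV. \<Sum>k\<in>UNIV. 4 * A$i$k * B$k$i / complex_of_real (t$i + t$k))"
    unfolding s1 s2 sum.distrib[symmetric]
  proof (intro sum.cong refl)
    fix i k
    have ne: "complex_of_real (t$i + t$k) \<noteq> 0" using pos[rule_format, of i] pos[rule_format, of k] by (simp del: of_real_add)
    show "complex_of_real (t $ i) * (Y $ i $ k * Z $ k $ i) + complex_of_real (t $ k) * (Y $ i $ k * Z $ k $ i) =
         4 * A $ i $ k * B $ k $ i / complex_of_real (t $ i + t $ k)"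
    proof -
      define S where "S = complex_of_real (t$i + t$k)"
      have S2: "complex_of_real (t$k + t$i) = S" unfolding S_def by (simp add: add.commute)
      have S3: "complex_of_real (t$i) + complex_of_real (t$k) = S" unfolding S_def by simp
      have y: "Y$i$k = 2 * A$i$k / S" unfolding Y_def sldx_def S_def by simp
      have z: "Z$k$i = 2 * B$k$i / S" unfolding Z_def sldx_def using S2 by simp
      have "complex_of_real (t $ i) * (Y $ i $ k * Z $ k $ i) + complex_of_real (t $ k) * (Y $ i $ k * Z $ k $ i)
          = S * (Y $ i $ k * Z $ k $ i)" by (simp only: S3[symmetric] distrib_right)
      also have "\<dots> = 4 * A $ i $ k * B $ k $ i / S" unfolding y z using ne unfolding S_def[symmetric] by (simp add: field_simps)
      finally show ?thesis unfolding S_def .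
    qed
  qed
  have s4: "(1/2::complex) * (\<Sum>i\<in>UNIV. \<Sum>k\<in>UNIV. 4 * A$i$k * B$k$i / complex_of_real (t$i + t$k))
     = (\<Sum>i\<in>UNIV. \<Sum>j\<in>UNIV. 2 * A$i$j * B$j$i / complex_of_real (t$i + t$j))"
    unfolding sum_distrib_left
  proof (intro sum.cong refl)
    fix i k
    show "1 / 2 * (4 * A $ i $ k * B $ k $ i / complex_of_real (t $ i + t $ k)) =
         2 * A $ i $ k * B $ k $ i / complex_of_real (t $ i + t $ k)" by simp
  qed
  show ?thesis
    unfolding qfisher_def SLD_explicit[OF pos hA] SLD_explicit[OF pos hB] Y_def[symmetric] Z_def[symmetric] s3 s4 ..
qed

lemma hermitian_cdiag: "hermitian (cdiag g)"
  unfolding hermitian_def ctrans_def cdiag_def by (simp add: vec_eq_iff)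

lemma cdiag_inj: "cdiag a = cdiag b \<Longrightarrow> a = b"
proof -
  assume h: "cdiag a = cdiag b"
  show "a = b"
  proof (simp add: vec_eq_iff, intro allI)
    fix k
    have "cdiag a $ k $ k = cdiag b $ k $ k" using h by simp
    then show "a $ k = b $ k" unfolding cdiag_def by simp
  qed
qed

lemma Lcost_explicit: "Lcost c X = -2 * (\<Sum>i\<in>UNIV. c$i * Re (X$i$i))"
  unfolding Lcost_def mtr_cdiag by (simp add: Re_sum)

lemma key_fisher:
  assumes pos: "\<forall>k. t$k > 0" and hX: "hermitian X" and tr: "mtr X = 0"
    and g: "g = (\<chi> k. 2 * t$k * ((\<Sum>j\<in>UNIV. c$j * t$j) - c$k))"
  shows "qfisher (cdiag t) (cdiag g) X = Lcost c X"
proof -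
  define s where "s = (\<Sum>j\<in>UNIV. c$j * t$j)"
  have inner: "(\<Sum>j\<in>UNIV. 2 * cdiag g $ i $ j * X $ j $ i / complex_of_real (t $ i + t $ j))
      = complex_of_real (2 * (s - c$i)) * X$i$i" for i
  proof -
    have "(\<Sum>j\<in>UNIV. 2 * cdiag g $ i $ j * X $ j $ i / complex_of_real (t $ i + t $ j))
       = (\<Sum>j\<in>UNIV. if i = j then 2 * complex_of_real (g$i) * X $ j $ i / complex_of_real (t $ i + t $ j) else 0)"
      by (rule sum.cong) (auto simp: cdiag_def)
    also have "\<dots> = 2 * complex_of_real (g$i) * X $ i $ i / complex_of_real (t $ i + t $ i)" by simp
    also have "\<dots> = complex_of_real (2 * (s - c$i)) * X$i$i"
    proof -
      have ti: "t$i \<noteq> 0" using pos by (metis less_irrefl)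
      have r: "2 * g$i / (t$i + t$i) = 2 * (s - c$i)" unfolding g s_def using ti by (simp add: field_simps)
      have "2 * complex_of_real (g$i) * X $ i $ i / complex_of_real (t $ i + t $ i)
          = complex_of_real (2 * g$i / (t$i + t$i)) * X $ i $ i" by (simp add: field_simps)
      then show ?thesis unfolding r .
    qed
    finally show ?thesis .
  qed
  have "qfisher (cdiag t) (cdiag g) X = Re (\<Sum>i\<in>UNIV. complex_of_real (2 * (s - c$i)) * X$i$i)"
    unfolding qfisher_explicit[OF pos hermitian_cdiag hX] inner ..
  also have "\<dots> = (\<Sum>i\<in>UNIV. 2 * (s - c$i) * Re (X$i$i))" by (simp add: Re_sum)
  also have "\<dots> = 2 * s * (\<Sum>i\<in>UNIV. Re (X$i$i)) - 2 * (\<Sum>i\<in>UNIV. c$i * Re (X$i$i))"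
    by (simp add: sum_distrib_left sum_subtractf algebra_simps)
  also have "(\<Sum>i\<in>UNIV. Re (X$i$i)) = 0" using tr unfolding mtr_def by (metis Re_sum zero_complex.sel(1))
  finally show ?thesis unfolding Lcost_explicit by simp
qed

lemma mtr_add: "mtr (A + B) = mtr A + mtr B"
  unfolding mtr_def by (simp add: sum.distrib)

lemma mtr_scaleR: "mtr (a *\<^sub>R A) = a *\<^sub>R mtr A"
  unfolding mtr_def by (simp add: scaleR_sum_right)

lemma bl_mtr: "bounded_linear (mtr :: complex^'n^'n \<Rightarrow> complex)"
  unfolding linear_conv_bounded_linear[symmetric]
  by (rule linearI) (simp_all add: mtr_add mtr_scaleR)

lemma ctrans_add: "ctrans (A + B) = ctrans A + ctrans B"
  unfolding ctrans_def by (simp add: vec_eq_iff)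

lemma ctrans_scaleR: "ctrans (a *\<^sub>R A) = a *\<^sub>R ctrans A"
  unfolding ctrans_def by (simp add: vec_eq_iff)

lemma bl_herm: "bounded_linear (\<lambda>A::complex^'n^'n. ctrans A - A)"
  unfolding linear_conv_bounded_linear[symmetric]
  by (rule linearI) (simp_all add: ctrans_add ctrans_scaleR algebra_simps)

lemma bl_Lcost: "bounded_linear (Lcost c :: complex^'n^'n \<Rightarrow> real)"
  unfolding linear_conv_bounded_linear[symmetric]
  by (rule linearI) (simp_all add: Lcost_explicit sum.distrib algebra_simps sum_distrib_left)

lemma deriv_const_lin:
  fixes f :: "'a::real_normed_vector \<Rightarrow> 'b::real_normed_vector"
  assumes bl: "bounded_linear f" and d: "(r has_vector_derivative X) (at 0)"
    and e: "\<epsilon> > 0" and k: "\<forall>\<tau>\<in>{-\<epsilon><..<\<epsilon>}. f (r \<tau>) = k"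
  shows "f X = 0"
proof -
  have d1: "((\<lambda>\<tau>. f (r \<tau>)) has_vector_derivative f X) (at 0)"
    using bounded_linear.has_vector_derivative[OF bl d] .
  have "((\<lambda>\<tau>. k) has_vector_derivative f X) (at 0)"
    by (rule has_vector_derivative_transform_within_open[OF d1, of "{-\<epsilon><..<\<epsilon>}"]) (use e k in auto)
  then show ?thesis using has_vector_derivative_const vector_derivative_unique_at by blast
qed

lemma curve_props:
  assumes "curve_through r \<rho> X"
  shows "hermitian X" "mtr X = 0"
proof -
  obtain \<epsilon> where e: "\<epsilon> > 0" and P: "\<forall>\<tau>\<in>{-\<epsilon><..<\<epsilon>}. r \<tau> \<in> Pdot"
    and d: "(r has_vector_derivative X) (at 0)"
    using assms unfolding curve_through_def by blast
  have "ctrans X - X = 0"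
    by (rule deriv_const_lin[OF bl_herm d e]) (use P in \<open>auto simp: Pdot_def pos_def_def hermitian_def\<close>)
  then show "hermitian X" unfolding hermitian_def by simp
  show "mtr X = 0"
    by (rule deriv_const_lin[OF bl_mtr d e]) (use P in \<open>auto simp: Pdot_def\<close>)
qed

lemma curve_Lderiv:
  assumes "curve_through r \<rho> X"
  shows "((\<lambda>\<tau>. Lcost c (r \<tau>)) has_real_derivative Lcost c X) (at 0)"
proof -
  have d: "(r has_vector_derivative X) (at 0)" using assms unfolding curve_through_def by blast
  show ?thesis unfolding has_real_derivative_iff_has_vector_derivative
    using bounded_linear.has_vector_derivative[OF bl_Lcost d] .
qed
lemma cnj_mult_self: "cnj z * z = complex_of_real ((cmod z)^2)"
  by (subst complex_norm_square) (rule mult.commute)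

lemma quad_bound:
  fixes x :: "complex^'n" and D :: "complex^'n^'n"
  shows "cmod (\<Sum>i\<in>UNIV. \<Sum>j\<in>UNIV. cnj (x$i) * D$i$j * x$j)
     \<le> (\<Sum>i\<in>UNIV. \<Sum>j\<in>UNIV. cmod (D$i$j)) * (\<Sum>k\<in>UNIV. (cmod (x$k))^2)"
proof -
  define N where "N = (\<Sum>k\<in>UNIV. (cmod (x$k))^2)"
  have xk: "(cmod (x$i))^2 \<le> N" for i
    unfolding N_def by (rule member_le_sum) auto
  have b: "cmod (x$i) * cmod (x$j) \<le> N" for i j
  proof -
    have "cmod (x$i) * cmod (x$j) \<le> ((cmod (x$i))^2 + (cmod (x$j))^2) / 2"
      using sum_squares_bound[of "cmod (x$i)" "cmod (x$j)"] by (simp add: power2_eq_square field_simps)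
    also have "\<dots> \<le> (N + N) / 2" using xk[of i] xk[of j] by (intro divide_right_mono add_mono) auto
    finally show ?thesis by simp
  qed
  have "cmod (\<Sum>i\<in>UNIV. \<Sum>j\<in>UNIV. cnj (x$i) * D$i$j * x$j)
      \<le> (\<Sum>i\<in>UNIV. \<Sum>j\<in>UNIV. cmod (cnj (x$i) * D$i$j * x$j))"
    by (rule order_trans[OF norm_sum sum_mono]) (rule norm_sum)
  also have "\<dots> \<le> (\<Sum>i\<in>UNIV. \<Sum>j\<in>UNIV. cmod (D$i$j) * N)"
  proof (intro sum_mono)
    fix i j
    have "cmod (cnj (x$i) * D$i$j * x$j) = cmod (D$i$j) * (cmod (x$i) * cmod (x$j))"
      by (simp add: norm_mult)
    also have "\<dots> \<le> cmod (D$i$j) * N" by (rule mult_left_mono[OF b]) simp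
    finally show "cmod (cnj (x$i) * D$i$j * x$j) \<le> cmod (D$i$j) * N" .
  qed
  also have "\<dots> = (\<Sum>i\<in>UNIV. \<Sum>j\<in>UNIV. cmod (D$i$j)) * N"
    by (simp add: sum_distrib_right)
  finally show ?thesis unfolding N_def .
qed

lemma quad_form:
  fixes x :: "complex^'n" and D :: "complex^'n^'n"
  shows "(\<Sum>i\<in>UNIV. cnj (x$i) * ((cdiag t + \<tau> *\<^sub>R D) *v x)$i)
    = complex_of_real (\<Sum>i\<in>UNIV. t$i * (cmod (x$i))^2) + complex_of_real \<tau> * (\<Sum>i\<in>UNIV. \<Sum>j\<in>UNIV. cnj (x$i) * D$i$j * x$j)"
proof -
  have mv: "((cdiag t + \<tau> *\<^sub>R D) *v x)$i = complex_of_real (t$i) * x$i + complex_of_real \<tau> * (\<Sum>j\<in>UNIV. D$i$j * x$j)" for i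
  proof -
    have "((cdiag t + \<tau> *\<^sub>R D) *v x)$i = (\<Sum>j\<in>UNIV. cdiag t $i$j * x$j) + (\<Sum>j\<in>UNIV. (\<tau> *\<^sub>R D$i$j) * x$j)"
      by (simp add: matrix_vector_mult_def distrib_right sum.distrib)
    also have "(\<Sum>j\<in>UNIV. cdiag t $i$j * x$j) = (\<Sum>j\<in>UNIV. if i = j then complex_of_real (t$i) * x$j else 0)"
      by (rule sum.cong) (auto simp: cdiag_def)
    also have "\<dots> = complex_of_real (t$i) * x$i" by simp
    also have "(\<Sum>j\<in>UNIV. (\<tau> *\<^sub>R D$i$j) * x$j) = complex_of_real \<tau> * (\<Sum>j\<in>UNIV. D$i$j * x$j)"
      by (simp add: scaleR_conv_of_real sum_distrib_left mult.assoc)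
    finally show ?thesis .
  qed
  have "(\<Sum>i\<in>UNIV. cnj (x$i) * ((cdiag t + \<tau> *\<^sub>R D) *v x)$i)
    = (\<Sum>i\<in>UNIV. complex_of_real (t$i * (cmod (x$i))^2) + complex_of_real \<tau> * (\<Sum>j\<in>UNIV. cnj (x$i) * D$i$j * x$j))"
  proof (rule sum.cong[OF refl])
    fix i
    have f1: "cnj (x$i) * (complex_of_real (t$i) * x$i) = complex_of_real (t$i * (cmod (x$i))^2)"
      using cnj_mult_self[of "x$i"] by (simp add: algebra_simps)
    have f2: "cnj (x$i) * (complex_of_real \<tau> * (\<Sum>j\<in>UNIV. D$i$j * x$j)) = complex_of_real \<tau> * (\<Sum>j\<in>UNIV. cnj (x$i) * D$i$j * x$j)"
      by (simp add: sum_distrib_left algebra_simps)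
    show "cnj (x$i) * ((cdiag t + \<tau> *\<^sub>R D) *v x)$i = complex_of_real (t$i * (cmod (x$i))^2) + complex_of_real \<tau> * (\<Sum>j\<in>UNIV. cnj (x$i) * D$i$j * x$j)"
      unfolding mv distrib_left f1 f2 ..
  qed
  also have "\<dots> = complex_of_real (\<Sum>i\<in>UNIV. t$i * (cmod (x$i))^2) + complex_of_real \<tau> * (\<Sum>i\<in>UNIV. \<Sum>j\<in>UNIV. cnj (x$i) * D$i$j * x$j)"
    by (simp add: sum.distrib sum_distrib_left)
  finally show ?thesis .
qed
lemma mtr_cdiag_id: "mtr (cdiag t) = complex_of_real (\<Sum>i\<in>UNIV. t$i)"
  unfolding mtr_def cdiag_def by simp

lemma pert_Pdot:
  fixes t :: "real^'n" and D :: "complex^'n^'n"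
  assumes pos: "\<forall>k. t$k > 0" and sum1: "(\<Sum>k\<in>UNIV. t$k) = 1"
    and hD: "hermitian D" and trD: "mtr D = 0"
  shows "\<exists>\<epsilon>>0. \<forall>\<tau>\<in>{-\<epsilon><..<\<epsilon>}. cdiag t + \<tau> *\<^sub>R D \<in> Pdot"
proof -
  define m where "m = Min (range (\<lambda>k. t$k))"
  have m_in: "m \<in> range (\<lambda>k. t$k)" unfolding m_def by (rule Min_in) auto
  then have m0: "m > 0" using pos by auto
  have mle: "m \<le> t$k" for k unfolding m_def by (rule Min_le) auto
  define M where "M = (\<Sum>i\<in>UNIV. \<Sum>j\<in>UNIV. cmod (D$i$j))"
  have M0: "M \<ge> 0" unfolding M_def by (intro sum_nonneg) auto
  define \<epsilon> where "\<epsilon> = m / (M + 1)"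
  have e0: "\<epsilon> > 0" unfolding \<epsilon>_def using m0 M0 by simp
  have "\<forall>\<tau>\<in>{-\<epsilon><..<\<epsilon>}. cdiag t + \<tau> *\<^sub>R D \<in> Pdot"
  proof
    fix \<tau> :: real assume "\<tau> \<in> {-\<epsilon><..<\<epsilon>}"
    then have ta: "\<bar>\<tau>\<bar> < \<epsilon>" by auto
    have tM: "\<bar>\<tau>\<bar> * M < m"
    proof -
      have "\<bar>\<tau>\<bar> * (M + 1) < m" using ta M0 unfolding \<epsilon>_def by (simp add: pos_less_divide_eq)
      moreover have "\<bar>\<tau>\<bar> * M \<le> \<bar>\<tau>\<bar> * (M + 1)" by (simp add: mult_left_mono)
      ultimately show ?thesis by linarith
    qed
    have herm: "hermitian (cdiag t + \<tau> *\<^sub>R D)"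
      using hD hermitian_cdiag[of t] unfolding hermitian_def by (simp add: ctrans_add ctrans_scaleR)
    have tr: "mtr (cdiag t + \<tau> *\<^sub>R D) = 1"
      by (simp add: mtr_add mtr_scaleR mtr_cdiag_id sum1 trD)
    have pd: "Re (\<Sum>i\<in>UNIV. cnj (x$i) * ((cdiag t + \<tau> *\<^sub>R D) *v x)$i) > 0" if x0: "x \<noteq> 0" for x :: "complex^'n"
    proof -
      define N where "N = (\<Sum>k\<in>UNIV. (cmod (x$k))^2)"
      define Q where "Q = (\<Sum>i\<in>UNIV. \<Sum>j\<in>UNIV. cnj (x$i) * D$i$j * x$j)"
      obtain k where xk: "x$k \<noteq> 0" using x0 by (auto simp: vec_eq_iff)
      have N0: "N > 0"
      proof -
        have "(cmod (x$k))^2 \<le> N" unfolding N_def by (rule member_le_sum) auto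
        moreover have "(cmod (x$k))^2 > 0" using xk by simp
        ultimately show ?thesis by linarith
      qed
      have QN: "cmod Q \<le> M * N" unfolding Q_def M_def N_def by (rule quad_bound)
      have low: "m * N \<le> (\<Sum>i\<in>UNIV. t$i * (cmod (x$i))^2)"
        unfolding N_def sum_distrib_left by (intro sum_mono mult_right_mono mle) auto
      have "\<bar>\<tau> * Re Q\<bar> \<le> \<bar>\<tau>\<bar> * (M * N)"
        unfolding abs_mult by (intro mult_left_mono order_trans[OF abs_Re_le_cmod QN]) auto
      also have "\<dots> < m * N" using tM N0 by (simp add: mult.assoc[symmetric])
      finally have "\<bar>\<tau> * Re Q\<bar> < m * N" .
      then have "(\<Sum>i\<in>UNIV. t$i * (cmod (x$i))^2) + \<tau> * Re Q > 0" using low by linarith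
      then show ?thesis unfolding quad_form Q_def[symmetric] by simp
    qed
    show "cdiag t + \<tau> *\<^sub>R D \<in> Pdot"
      unfolding Pdot_def pos_def_def using herm tr pd by blast
  qed
  then show ?thesis using e0 by blast
qed

lemma affine_curve:
  fixes t :: "real^'n" and D :: "complex^'n^'n"
  assumes pos: "\<forall>k. t$k > 0" and sum1: "(\<Sum>k\<in>UNIV. t$k) = 1"
    and hD: "hermitian D" and trD: "mtr D = 0"
  shows "curve_through (\<lambda>\<tau>. cdiag t + \<tau> *\<^sub>R D) (cdiag t) D"
proof -
  obtain \<epsilon> where e: "\<epsilon> > 0" "\<forall>\<tau>\<in>{-\<epsilon><..<\<epsilon>}. cdiag t + \<tau> *\<^sub>R D \<in> Pdot"
    using pert_Pdot[OF assms] by blast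
  have d: "((\<lambda>\<tau>. cdiag t + \<tau> *\<^sub>R D) has_vector_derivative D) (at x)" for x
    unfolding has_vector_derivative_def by (auto intro!: derivative_eq_intros)
  define Dk :: "nat \<Rightarrow> real \<Rightarrow> complex^'n^'n" where
    "Dk = (\<lambda>k. if k = 0 then (\<lambda>\<tau>. cdiag t + \<tau> *\<^sub>R D) else if k = 1 then (\<lambda>_. D) else (\<lambda>_. 0))"
  have "\<forall>k. \<forall>s\<in>{-\<epsilon><..<\<epsilon>}. (Dk k has_vector_derivative Dk (Suc k) s) (at s)"
  proof (intro allI ballI)
    fix k :: nat and s :: real
    show "(Dk k has_vector_derivative Dk (Suc k) s) (at s)"
      using d[of s] by (cases "k = 0"; cases "k = 1") (auto simp: Dk_def)
  qed
  then have "smooth_on {-\<epsilon><..<\<epsilon>} (\<lambda>\<tau>. cdiag t + \<tau> *\<^sub>R D)"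
    unfolding smooth_on_def by (intro exI[of _ Dk]) (auto simp: Dk_def)
  then show ?thesis unfolding curve_through_def using e d[of 0] by auto
qed
lemma ctrans_diff: "ctrans (A - B) = ctrans A - ctrans B"
  unfolding ctrans_def by (simp add: vec_eq_iff)

lemma mtr_diff: "mtr (A - B) = mtr A - mtr B"
  unfolding mtr_def by (simp add: sum_subtractf)

lemma fisher_diff:
  fixes t :: "real^'n" and G H :: "complex^'n^'n"
  assumes pos: "\<forall>k. t$k > 0" and hG: "hermitian G" and hH: "hermitian H"
  shows "qfisher (cdiag t) G (G - H) - qfisher (cdiag t) H (G - H)
     = (\<Sum>i\<in>UNIV. \<Sum>j\<in>UNIV. 2 * (cmod ((G - H)$i$j))^2 / (t$i + t$j))"
proof -
  define D where "D = G - H"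
  have hD: "hermitian D" using hG hH unfolding D_def hermitian_def by (simp add: ctrans_diff)
  have cD: "D$j$i = cnj (D$i$j)" for i j
    using hD unfolding hermitian_def ctrans_def vec_eq_iff by (metis vec_lambda_beta)
  have "qfisher (cdiag t) G D - qfisher (cdiag t) H D
     = Re ((\<Sum>i\<in>UNIV. \<Sum>j\<in>UNIV. 2 * G$i$j * D$j$i / complex_of_real (t$i + t$j))
         - (\<Sum>i\<in>UNIV. \<Sum>j\<in>UNIV. 2 * H$i$j * D$j$i / complex_of_real (t$i + t$j)))"
    unfolding qfisher_explicit[OF pos hG hD] qfisher_explicit[OF pos hH hD] by simp
  also have "(\<Sum>i\<in>UNIV. \<Sum>j\<in>UNIV. 2 * G$i$j * D$j$i / complex_of_real (t$i + t$j))
         - (\<Sum>i\<in>UNIV. \<Sum>j\<in>UNIV. 2 * H$i$j * D$j$i / complex_of_real (t$i + t$j))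
      = (\<Sum>i\<in>UNIV. \<Sum>j\<in>UNIV. complex_of_real (2 * (cmod (D$i$j))^2 / (t$i + t$j)))"
    unfolding sum_subtractf[symmetric]
  proof (intro sum.cong refl)
    fix i j
    have "2 * G$i$j * D$j$i / complex_of_real (t$i + t$j) - 2 * H$i$j * D$j$i / complex_of_real (t$i + t$j)
        = 2 * (D$i$j * cnj (D$i$j)) / complex_of_real (t$i + t$j)"
    proof -
      have gh: "D$i$j = G$i$j - H$i$j" unfolding D_def by simp
      have cd: "D$j$i = cnj (D$i$j)" by (rule cD)
      have "2 * G$i$j * D$j$i / complex_of_real (t$i + t$j) - 2 * H$i$j * D$j$i / complex_of_real (t$i + t$j)
          = 2 * ((G$i$j - H$i$j) * D$j$i) / complex_of_real (t$i + t$j)"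
        by (simp add: diff_divide_distrib[symmetric] algebra_simps)
      also have "\<dots> = 2 * (D$i$j * cnj (D$i$j)) / complex_of_real (t$i + t$j)"
        unfolding gh[symmetric] cd ..
      finally show ?thesis .
    qed
    also have "\<dots> = complex_of_real (2 * (cmod (D$i$j))^2 / (t$i + t$j))"
      by (simp add: complex_norm_square[symmetric])
    finally show "2 * G$i$j * D$j$i / complex_of_real (t$i + t$j) - 2 * H$i$j * D$j$i / complex_of_real (t$i + t$j)
        = complex_of_real (2 * (cmod (D$i$j))^2 / (t$i + t$j))" .
  qed
  also have "Re (\<Sum>i\<in>UNIV. \<Sum>j\<in>UNIV. complex_of_real (2 * (cmod (D$i$j))^2 / (t$i + t$j)))
     = (\<Sum>i\<in>UNIV. \<Sum>j\<in>UNIV. 2 * (cmod (D$i$j))^2 / (t$i + t$j))"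
    by (simp add: Re_sum)
  finally show ?thesis unfolding D_def .
qed

lemma mu_push_explicit:
  fixes t c :: "real^'n"
  assumes pos: "\<forall>k. t$k > 0" and sum1: "(\<Sum>k\<in>UNIV. t$k) = 1"
  shows "mu_push_gradLambda c (cdiag t) = cdiag (\<chi> k. 2 * t$k * ((\<Sum>j\<in>UNIV. c$j * t$j) - c$k))"
proof -
  define w0 :: "real^'n" where "w0 = (\<chi> k. sqrt (t$k))"
  have w0sq: "(w0$k)^2 = t$k" for k unfolding w0_def using pos by (simp add: less_imp_le)
  have "w0 \<bullet> w0 = 1" unfolding inner_vec_def using w0sq sum1 by (simp add: power2_eq_square)
  then have "norm w0 = 1" by (simp add: norm_eq_1)
  moreover have "\<forall>k. w0$k \<noteq> 0" unfolding w0_def using pos by (simp add: less_imp_neq[symmetric])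
  moreover have "mu w0 = cdiag t" unfolding mu_def using w0sq by (simp add: vec_eq_iff[of "(\<chi> k. (w0$k)^2)"])
  ultimately have ex: "\<exists>w. w \<in> Sm \<and> mu w = cdiag t" unfolding Sm_def by blast
  define w where "w = (SOME w. w \<in> Sm \<and> mu w = cdiag t)"
  have w: "w \<in> Sm \<and> mu w = cdiag t" unfolding w_def using someI_ex[OF ex] .
  have wsq: "(w$k)^2 = t$k" for k
  proof -
    have "(\<chi> k. (w$k)^2) = t" using w unfolding mu_def by (auto intro: cdiag_inj)
    then show ?thesis by (metis vec_lambda_beta)
  qed
  define s where "s = (\<Sum>j\<in>UNIV. c$j * t$j)"
  have ws: "w \<bullet> (\<chi> k. c$k * w$k) = s"
    unfolding inner_vec_def s_def
  proof (intro sum.cong refl)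
    fix j show "w $ j \<bullet> (\<chi> k. c $ k * w $ k) $ j = c $ j * t $ j"
      using wsq[of j] by (simp add: power2_eq_square algebra_simps)
  qed
  have "mu_push_gradLambda c (cdiag t) = mu_diff w (gradLambda c w)"
    unfolding mu_push_gradLambda_def w_def Let_def ..
  also have "\<dots> = cdiag (\<chi> k. 2 * t$k * (s - c$k))"
    unfolding mu_diff_def gradLambda_def Let_def ws
  proof -
    have "(\<chi> k. 2 * (w $ k * (- (\<chi> k. c $ k * w $ k) + s *\<^sub>R w) $ k)) = (\<chi> k. 2 * t$k * (s - c$k))"
    proof (simp add: vec_eq_iff, intro allI)
      fix k show "w $ k * (s * w $ k - c $ k * w $ k) = t $ k * (s - c $ k)"
        using wsq[of k] by (simp add: power2_eq_square algebra_simps)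
    qed
    then show "cdiag (\<chi> k. 2 * (w $ k * (- (\<chi> k. c $ k * w $ k) + s *\<^sub>R w) $ k)) = cdiag (\<chi> k. 2 * t$k * (s - c$k))"
      by simp
  qed
  finally show ?thesis unfolding s_def .
qed
theorem theorem1:
  fixes c :: "real^'n" and \<Theta> :: "complex^'n^'n"
  assumes "CARD('n) \<ge> 2"
    and "\<Theta> \<in> Dm"
  shows "qgrad (Lcost c) \<Theta> = mu_push_gradLambda c \<Theta>"
proof -
  obtain t where pos: "\<forall>k. t$k > 0" and sum1: "(\<Sum>k\<in>UNIV. t$k) = 1" and Th: "\<Theta> = cdiag t"
    using assms(2) unfolding Dm_def by blast
  define g where "g = (\<chi> k. 2 * t$k * ((\<Sum>j\<in>UNIV. c$j * t$j) - c$k))"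
  define G0 where "G0 = cdiag g"
  have push: "mu_push_gradLambda c \<Theta> = G0"
    unfolding Th G0_def g_def by (rule mu_push_explicit[OF pos sum1])
  have hG0: "hermitian G0" unfolding G0_def by (rule hermitian_cdiag)
  have trG0: "mtr G0 = 0"
  proof -
    define sc where "sc = (\<Sum>j\<in>UNIV. c$j * t$j)"
    have "(\<Sum>k\<in>UNIV. g$k) = (\<Sum>k\<in>UNIV. (2 * sc) * t$k - 2 * (c$k * t$k))"
      unfolding g_def sc_def[symmetric] by (intro sum.cong refl) (simp add: algebra_simps)
    also have "\<dots> = (2 * sc) * (\<Sum>k\<in>UNIV. t$k) - 2 * sc"
      unfolding sum_subtractf sum_distrib_left[symmetric] sc_def ..
    finally have "(\<Sum>k\<in>UNIV. g$k) = 2 * sc * (\<Sum>k\<in>UNIV. t$k) - 2 * sc" .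
    then have "(\<Sum>k\<in>UNIV. g$k) = 0" using sum1 by simp
    then show ?thesis unfolding G0_def mtr_cdiag_id by simp
  qed
  have fG0: "qfisher \<Theta> G0 X = Lcost c X" if "hermitian X" "mtr X = 0" for X
    unfolding Th G0_def by (rule key_fisher[OF pos that g_def])
  let ?P = "\<lambda>G. G \<in> tangent \<and> (\<forall>r \<Xi>. curve_through r \<Theta> \<Xi> \<longrightarrow>
        ((\<lambda>\<tau>. Lcost c (r \<tau>)) has_real_derivative qfisher \<Theta> G \<Xi>) (at 0))"
  have PG0: "?P G0"
  proof
    show "G0 \<in> tangent" unfolding tangent_def using hG0 trG0 by simp
    show "\<forall>r \<Xi>. curve_through r \<Theta> \<Xi> \<longrightarrow>
        ((\<lambda>\<tau>. Lcost c (r \<tau>)) has_real_derivative qfisher \<Theta> G0 \<Xi>) (at 0)"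
    proof (intro allI impI)
      fix r \<Xi> assume cr: "curve_through r \<Theta> \<Xi>"
      show "((\<lambda>\<tau>. Lcost c (r \<tau>)) has_real_derivative qfisher \<Theta> G0 \<Xi>) (at 0)"
        unfolding fG0[OF curve_props[OF cr]] by (rule curve_Lderiv[OF cr])
    qed
  qed
  have uniq: "G = G0" if PG: "?P G" for G
  proof -
    define D where "D = G - G0"
    have hG: "hermitian G" "mtr G = 0" using PG unfolding tangent_def by auto
    have hD: "hermitian D" using hG hG0 unfolding D_def hermitian_def by (simp add: ctrans_diff)
    have trD: "mtr D = 0" using hG trG0 unfolding D_def by (simp add: mtr_diff)
    have cr: "curve_through (\<lambda>\<tau>. cdiag t + \<tau> *\<^sub>R D) \<Theta> D"
      unfolding Th by (rule affine_curve[OF pos sum1 hD trD])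
    have d1: "((\<lambda>\<tau>. Lcost c (cdiag t + \<tau> *\<^sub>R D)) has_real_derivative qfisher \<Theta> G D) (at 0)"
      using PG cr by blast
    have d2: "((\<lambda>\<tau>. Lcost c (cdiag t + \<tau> *\<^sub>R D)) has_real_derivative qfisher \<Theta> G0 D) (at 0)"
      using PG0 cr by blast
    have eq: "qfisher \<Theta> G D - qfisher \<Theta> G0 D = 0" using DERIV_unique[OF d1 d2] by simp
    have S0: "(\<Sum>i\<in>UNIV. \<Sum>j\<in>UNIV. 2 * (cmod (D$i$j))^2 / (t$i + t$j)) = 0"
      using eq fisher_diff[OF pos hG(1) hG0] unfolding Th D_def by simp
    have nn: "0 \<le> 2 * (cmod (D$i$j))^2 / (t$i + t$j)" for i j
      using pos by (simp add: add_nonneg_nonneg less_imp_le)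
    have "\<forall>i\<in>UNIV. (\<Sum>j\<in>UNIV. 2 * (cmod (D$i$j))^2 / (t$i + t$j)) = 0"
      using S0 by (subst sum_nonneg_eq_0_iff[symmetric]) (auto intro: sum_nonneg nn)
    then have "\<forall>i j. 2 * (cmod (D$i$j))^2 / (t$i + t$j) = 0"
      using nn by (simp add: sum_nonneg_eq_0_iff)
    then have "\<forall>i j. D$i$j = 0"
    proof (intro allI)
      fix i j assume a: "\<forall>i j. 2 * (cmod (D$i$j))^2 / (t$i + t$j) = 0"
      have "t$i + t$j \<noteq> 0" using pos by (metis add_pos_pos less_irrefl)
      then show "D$i$j = 0" using a[rule_format, of i j] by simp
    qed
    then have "D = 0" by (simp add: vec_eq_iff)
    then show ?thesis unfolding D_def by simp
  qed
  have "qgrad (Lcost c) \<Theta> = G0"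
    unfolding qgrad_def by (rule the_equality[of ?P, OF PG0 uniq])
  then show ?thesis using push by simp
qed
end
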